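(* Let $\lambda>0$ and let $(u_n)\subset E_\lambda$ satisfy $\Psi_\lambda(u_n)=c_\lambda+o_n(1)$ and $$\|v\|_\lambda-\|u_n\|_\lambda\ge\int_{\mathbb{R}^N}f(u_n)(v-u_n)\,dx-\tau_n\|v-u_n\|_\lambda\quad\text{for all } v\in E_\lambda,$$ where $\tau_n\to0$. Then $(u_n)$ is bounded in $E_\lambda$.
   Context: $N\ge2$, $1^*=N/(N-1)$. $f$ satisfies: $(f_1)$ $f\in C(\mathbb{R})$; $(f_2)$ $f(s)=o(1)$ as $s\to0$; $(f_3)$ $|f(s)|\le c_1+c_2|s|^{p-1}$ for some $c_1,c_2>0$, $p\in(1,1^* )$; $(f_4)$ there is $\theta>1$ with $0<\theta F(s)\le f(s)s$ for $s\ne0$, $F(s)=\int_0^sf$; $(f_5)$ $f$ increasing. $V:\mathbb{R}^N\to\mathbb{R}$ satisfies $V\ge0$, $|\{V\le M_0\}|<\infty$ for some $M_0>0$, and $\Omega=\mathrm{int}(V^{-1}(\{0\}))\ne\emptyset$. $E_\lambda=\{u\in BV(\mathbb{R}^N):\int(1+\lambda V)|u|<\infty\}$, $\|u\|_\lambda=\int_{\mathbb{R}^N}|Du|+\int_{\mathbb{R}^N}(1+\lambda V(x))|u|\,dx$, $\Psi_\lambda(u)=\|u\|_\lambda-\int_{\mathbb{R}^N}F(u)\,dx$. $c_\lambda=\inf_{\gamma\in\Gamma_\lambda}\max_{t\in[0,1]}\Psi_\lambda(\gamma(t))$, $\Gamma_\lambda=\{\gamma\in C([0,1],E_\lambda):\gamma(0)=0,\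 \Psi_\lambda(\gamma(1))<0\}$. *)

theory Defs
  imports "HOL-Analysis.Analysis"
begin

definition test_field :: "('a::euclidean_space \<Rightarrow> 'a) \<Rightarrow> ('a \<Rightarrow> 'a \<Rightarrow>\<^sub>L 'a) \<Rightarrow> bool" where
  "test_field \<phi> \<phi>' \<longleftrightarrow>
     (\<forall>x. (\<phi> has_derivative blinfun_apply (\<phi>' x)) (at x)) \<and>
     continuous_on UNIV \<phi>' \<and>
     compact (closure {x. \<phi> x \<noteq> 0}) \<and>
     (\<forall>x. norm (\<phi> x) \<le> 1)"

definition divergence :: "('a::euclidean_space \<Rightarrow> 'a \<Rightarrow>\<^sub>L 'a) \<Rightarrow> 'a \<Rightarrow> real" where
  "divergence \<phi>' x = (\<Sum>i\<in>Basis. (blinfun_apply (\<phi>' x) i) \<bullet> i)"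

definition total_variation :: "('a::euclidean_space \<Rightarrow> real) \<Rightarrow> ereal" where
  "total_variation u =
     (SUP \<phi>\<in>{(\<phi>, \<phi>'). test_field \<phi> \<phi>'}.
        ereal (\<integral>x. u x * divergence (snd \<phi>) x \<partial>lebesgue))"

definition BV :: "('a::euclidean_space \<Rightarrow> real) set" where
  "BV = {u. integrable lebesgue u \<and> total_variation u < \<infinity>}"

definition E_sp :: "('a::euclidean_space \<Rightarrow> real) \<Rightarrow> real \<Rightarrow> ('a \<Rightarrow> real) set" where
  "E_sp V lm = {u. u \<in> BV \<and> integrable lebesgue (\<lambda>x. (1 + lm * V x) * \<bar>u x\<bar>)}"

definition norm_E :: "('a::euclidean_space \<Rightarrow> real) \<Rightarrow> real \<Rightarrow> ('a \<Rightarrow> real) \<Rightarrow> real" where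
  "norm_E V lm u = real_of_ereal (total_variation u) + (\<integral>x. (1 + lm * V x) * \<bar>u x\<bar> \<partial>lebesgue)"

definition prim :: "(real \<Rightarrow> real) \<Rightarrow> real \<Rightarrow> real" where
  "prim f s = (LBINT t=0..s. f t)"

definition Psi :: "('a::euclidean_space \<Rightarrow> real) \<Rightarrow> real \<Rightarrow> (real \<Rightarrow> real) \<Rightarrow> ('a \<Rightarrow> real) \<Rightarrow> real" where
  "Psi V lm f u = norm_E V lm u - (\<integral>x. prim f (u x) \<partial>lebesgue)"

definition Gamma :: "('a::euclidean_space \<Rightarrow> real) \<Rightarrow> real \<Rightarrow> (real \<Rightarrow> real) \<Rightarrow> (real \<Rightarrow> 'a \<Rightarrow> real) set" where
  "Gamma V lm f = {\<gamma>.
     (\<forall>t\<in>{0..1}. \<gamma> t \<in> E_sp V lm) \<and>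
     (\<forall>t\<in>{0..1}. \<forall>\<epsilon>>0. \<exists>\<delta>>0. \<forall>s\<in>{0..1}. \<bar>s - t\<bar> < \<delta> \<longrightarrow>
         norm_E V lm (\<lambda>x. \<gamma> s x - \<gamma> t x) < \<epsilon>) \<and>
     (AE x in lebesgue. \<gamma> 0 x = 0) \<and>
     Psi V lm f (\<gamma> 1) < 0}"

definition mp_level :: "('a::euclidean_space \<Rightarrow> real) \<Rightarrow> real \<Rightarrow> (real \<Rightarrow> real) \<Rightarrow> 'a itself \<Rightarrow> real" where
  "mp_level V lm f _ = Inf ((\<lambda>\<gamma>. Sup ((\<lambda>t. Psi V lm f (\<gamma> t)) ` {0..1})) ` Gamma V lm f)"

end

theory Submission
  imports Defs
begin

definition TFS :: "(('a::euclidean_space \<Rightarrow> 'a) \<times> ('a \<Rightarrow> 'a \<Rightarrow>\<^sub>L 'a)) set" where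
  "TFS = {(\<phi>, \<phi>'). test_field \<phi> \<phi>'}"

lemma tv_alt: "total_variation u = (SUP p\<in>TFS. ereal (\<integral>x. u x * divergence (snd p) x \<partial>lebesgue))"
  unfolding total_variation_def TFS_def by simp

lemma zero_TFS: "((\<lambda>_. 0), (\<lambda>_. 0)) \<in> (TFS :: (('a::euclidean_space \<Rightarrow> 'a) \<times> ('a \<Rightarrow> 'a \<Rightarrow>\<^sub>L 'a)) set)"
  unfolding TFS_def test_field_def by (auto simp: zero_blinfun.rep_eq intro: has_derivative_const)

lemma TFS_ne: "TFS \<noteq> {}" using zero_TFS by blast

lemma tv_nonneg: "0 \<le> total_variation (u :: 'a::euclidean_space \<Rightarrow> real)"
proof -
  have "ereal (\<integral>x. u x * divergence (snd ((\<lambda>_. 0::'a), (\<lambda>_. 0::'a \<Rightarrow>\<^sub>L 'a))) x \<partial>lebesgue)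
      \<le> total_variation u"
    unfolding tv_alt using SUP_upper[OF zero_TFS, of "\<lambda>p. ereal (\<integral>x. u x * divergence (snd p) x \<partial>lebesgue)"] by simp
  moreover have "divergence (\<lambda>_. 0::'a \<Rightarrow>\<^sub>L 'a) x = 0" for x
    unfolding divergence_def by simp
  ultimately show ?thesis by (simp add: zero_ereal_def)
qed

definition negp :: "('a::euclidean_space \<Rightarrow> 'a) \<times> ('a \<Rightarrow> 'a \<Rightarrow>\<^sub>L 'a) \<Rightarrow> ('a \<Rightarrow> 'a) \<times> ('a \<Rightarrow> 'a \<Rightarrow>\<^sub>L 'a)" where
  "negp p = ((\<lambda>x. - fst p x), (\<lambda>x. - snd p x))"

lemma negp_TFS: "p \<in> TFS \<Longrightarrow> negp p \<in> TFS"
proof -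
  assume "p \<in> TFS"
  then obtain \<phi> \<phi>' where p: "p = (\<phi>, \<phi>')" and t: "test_field \<phi> \<phi>'" unfolding TFS_def by auto
  have d: "((\<lambda>x. - \<phi> x) has_derivative blinfun_apply (- \<phi>' x)) (at x)" for x
  proof -
    have "((\<lambda>x. - \<phi> x) has_derivative (\<lambda>h. - blinfun_apply (\<phi>' x) h)) (at x)"
      using t unfolding test_field_def by (auto intro: has_derivative_minus)
    moreover have "blinfun_apply (- \<phi>' x) = (\<lambda>h. - blinfun_apply (\<phi>' x) h)"
      by (auto simp: uminus_blinfun.rep_eq)
    ultimately show ?thesis by simp
  qed
  have c: "continuous_on UNIV (\<lambda>x. - \<phi>' x)"
    using t unfolding test_field_def by (auto intro: continuous_on_minus)
  have "{x. - \<phi> x \<noteq> 0} = {x. \<phi> x \<noteq> 0}" by auto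
  then show ?thesis using t d c unfolding TFS_def test_field_def negp_def p by auto
qed

lemma negp_negp: "negp (negp p) = p" unfolding negp_def by (cases p) auto

lemma negp_image: "negp ` TFS = TFS"
proof
  show "negp ` TFS \<subseteq> TFS" using negp_TFS by blast
  show "TFS \<subseteq> negp ` TFS"
  proof
    fix p assume "p \<in> TFS"
    then have "negp p \<in> TFS" by (rule negp_TFS)
    then show "p \<in> negp ` TFS" using negp_negp by (metis image_eqI)
  qed
qed

lemma div_neg: "divergence (\<lambda>x. - \<phi>' x) x = - divergence \<phi>' x"
  unfolding divergence_def by (simp add: uminus_blinfun.rep_eq sum_negf)

lemma tv_neg: "total_variation (\<lambda>x. - u x) = total_variation (u :: 'a::euclidean_space \<Rightarrow> real)"
proof -
  define h where "h p = ereal (\<integral>x. u x * divergence (snd p) x \<partial>lebesgue)" for p :: "('a \<Rightarrow> 'a) \<times> ('a \<Rightarrow> 'a \<Rightarrow>\<^sub>L 'a)"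
  have "total_variation (\<lambda>x. - u x) = (SUP p\<in>TFS. h (negp p))"
    unfolding tv_alt h_def negp_def by (simp add: div_neg)
  also have "\<dots> = (SUP q\<in>negp ` TFS. h q)" by (simp add: image_comp)
  also have "\<dots> = total_variation u" unfolding negp_image tv_alt h_def by simp
  finally show ?thesis .
qed

lemma tv_cmult_nonneg: "c \<ge> 0 \<Longrightarrow> total_variation (\<lambda>x. c * u x) = ereal c * total_variation (u :: 'a::euclidean_space \<Rightarrow> real)"
proof -
  assume c: "c \<ge> 0"
  have "total_variation (\<lambda>x. c * u x) = (SUP p\<in>TFS. ereal c * ereal (\<integral>x. u x * divergence (snd p) x \<partial>lebesgue))"
    unfolding tv_alt by (simp add: mult.assoc)
  also have "\<dots> = ereal c * total_variation u"
    unfolding tv_alt by (rule Sup_ereal_mult_left'[OF TFS_ne c, symmetric])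
  finally show ?thesis .
qed

lemma tv_cmult: "total_variation (\<lambda>x. c * u x) = ereal \<bar>c\<bar> * total_variation (u :: 'a::euclidean_space \<Rightarrow> real)"
proof (cases "c \<ge> 0")
  case True then show ?thesis using tv_cmult_nonneg[OF True] by simp
next
  case False
  have "(\<lambda>x. c * u x) = (\<lambda>x. \<bar>c\<bar> * (- u x))" using False by auto
  then have "total_variation (\<lambda>x. c * u x) = ereal \<bar>c\<bar> * total_variation (\<lambda>x. - u x)"
    using tv_cmult_nonneg[of "\<bar>c\<bar>" "\<lambda>x. - u x"] by simp
  then show ?thesis using tv_neg[of u] by simp
qed

lemma normE_cmult: "norm_E V lm (\<lambda>x. c * u x) = \<bar>c\<bar> * norm_E V lm u"
proof -
  have "(\<lambda>x. (1 + lm * V x) * \<bar>c * u x\<bar>) = (\<lambda>x. \<bar>c\<bar> * ((1 + lm * V x) * \<bar>u x\<bar>))"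
    by (auto simp: abs_mult)
  then show ?thesis unfolding norm_E_def tv_cmult by (simp add: distrib_left)
qed

lemma E_cmult: "u \<in> E_sp V lm \<Longrightarrow> (\<lambda>x. c * u x) \<in> E_sp V lm"
proof -
  assume u: "u \<in> E_sp V lm"
  have "(\<lambda>x. (1 + lm * V x) * \<bar>c * u x\<bar>) = (\<lambda>x. \<bar>c\<bar> * ((1 + lm * V x) * \<bar>u x\<bar>))"
    by (auto simp: abs_mult)
  moreover have "total_variation u < \<infinity>" using u unfolding E_sp_def BV_def by auto
  then have "ereal \<bar>c\<bar> * total_variation u < \<infinity>"
    using tv_nonneg[of u] by (cases "total_variation u") auto
  then have "total_variation (\<lambda>x. c * u x) < \<infinity>" by (simp add: tv_cmult)
  ultimately show ?thesis using u unfolding E_sp_def BV_def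
    by (auto intro: integrable_mult_right)
qed

lemma normE_nonneg: "norm_E V lm u \<ge> 0" if "\<forall>x. V x \<ge> 0" "lm > 0"
proof -
  have "0 \<le> real_of_ereal (total_variation u)"
    using tv_nonneg[of u] by (simp add: real_of_ereal_pos)
  moreover have "0 \<le> (\<integral>x. (1 + lm * V x) * \<bar>u x\<bar> \<partial>lebesgue)"
    using that by (intro integral_nonneg_AE) auto
  ultimately show ?thesis unfolding norm_E_def by simp
qed

theorem lemma3p3:
  fixes V :: "'a::euclidean_space \<Rightarrow> real"
    and f :: "real \<Rightarrow> real"
    and lm :: real
    and u :: "nat \<Rightarrow> 'a \<Rightarrow> real"
    and \<tau> :: "nat \<Rightarrow> real"
  assumes dim: "DIM('a) \<ge> 2"
    and f1: "continuous_on UNIV f"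
    and f2: "(f \<longlongrightarrow> 0) (at 0)"
    and f3: "\<exists>c1>0. \<exists>c2>0. \<exists>p. 1 < p \<and> p < real DIM('a) / (real DIM('a) - 1) \<and>
               (\<forall>s. \<bar>f s\<bar> \<le> c1 + c2 * \<bar>s\<bar> powr (p - 1))"
    and f4: "\<exists>\<theta>>1. \<forall>s. s \<noteq> 0 \<longrightarrow> 0 < \<theta> * prim f s \<and> \<theta> * prim f s \<le> f s * s"
    and f5: "strict_mono f"
    and V_meas: "V \<in> borel_measurable lebesgue"
    and V_nonneg: "\<forall>x. V x \<ge> 0"
    and V_level: "\<exists>M0>0. emeasure lebesgue {x. V x \<le> M0} < \<infinity>"
    and V_zero: "interior (V -` {0}) \<noteq> {}"
    and lam: "lm > 0"
    and uE: "\<forall>n. u n \<in> E_sp V lm"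
    and PsiLim: "(\<lambda>n. Psi V lm f (u n)) \<longlonglongrightarrow> mp_level V lm f TYPE('a)"
    and tau: "\<tau> \<longlonglongrightarrow> 0"
    and PS: "\<forall>n. \<forall>v\<in>E_sp V lm.
               norm_E V lm v - norm_E V lm (u n) \<ge>
               (\<integral>x. f (u n x) * (v x - u n x) \<partial>lebesgue)
               - \<tau> n * norm_E V lm (\<lambda>x. v x - u n x)"
  shows "\<exists>C. \<forall>n. norm_E V lm (u n) \<le> C"
proof -
  obtain \<theta> where th: "\<theta> > 1" and thF: "\<And>s. s \<noteq> 0 \<Longrightarrow> 0 < \<theta> * prim f s \<and> \<theta> * prim f s \<le> f s * s"
    using f4 by blast
  have Fle: "\<theta> * prim f s \<le> f s * s" for s
    using thF[of s] by (cases "s = 0") (auto simp: prim_def zero_ereal_def)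
  have fs: "0 \<le> f s * s" for s
    using thF[of s] by (cases "s = 0") auto
  obtain M where M: "\<And>n. Psi V lm f (u n) \<le> M"
  proof -
    have "Bseq (\<lambda>n. Psi V lm f (u n))" using PsiLim convergent_imp_Bseq convergentI by blast
    then obtain K where K: "\<And>n. norm (Psi V lm f (u n)) \<le> K" unfolding Bseq_def by auto
    have "Psi V lm f (u n) \<le> K" for n using K[of n] by simp
    then show ?thesis using that[of K] by blast
  qed
  define \<delta> where "\<delta> = min ((\<theta> - 1) / 2) (1/2)"
  have \<delta>pos: "\<delta> > 0" using th unfolding \<delta>_def by auto
  define \<kappa> where "\<kappa> = 1 - (1 + \<delta>) / \<theta>"
  have "1 + \<delta> < \<theta>" using th unfolding \<delta>_def by (simp add: min_def field_simps)
  then have \<kappa>pos: "\<kappa> > 0" using th unfolding \<kappa>_def by (auto simp: field_simps)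
  obtain N0 where N0: "\<And>n. n \<ge> N0 \<Longrightarrow> \<bar>\<tau> n\<bar> < \<delta>"
  proof -
    from tau \<delta>pos obtain no where "\<forall>n\<ge>no. dist (\<tau> n) 0 < \<delta>" unfolding LIMSEQ_def by blast
    then show ?thesis using that[of no] by simp
  qed
  have nn: "\<And>w. norm_E V lm w \<ge> 0" using normE_nonneg V_nonneg lam by blast
  have big: "norm_E V lm (u n) \<le> max 0 (M / \<kappa>)" if n: "n \<ge> N0" for n
  proof -
    let ?u = "u n"
    let ?r = "norm_E V lm ?u"
    have tn: "\<bar>\<tau> n\<bar> < \<delta>" using N0 n by blast
    show ?thesis
    proof (cases "integrable lebesgue (\<lambda>x. f (?u x) * ?u x)")
      case True
      have "(\<lambda>x. 2 * ?u x) \<in> E_sp V lm" using uE E_cmult by blast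
      then have "norm_E V lm (\<lambda>x. 2 * ?u x) - ?r \<ge>
               (\<integral>x. f (?u x) * (2 * ?u x - ?u x) \<partial>lebesgue)
               - \<tau> n * norm_E V lm (\<lambda>x. 2 * ?u x - ?u x)" by (rule PS[rule_format])
      moreover have "(\<lambda>x. 2 * ?u x - ?u x) = ?u" by auto
      moreover have "(\<lambda>x. f (?u x) * (2 * ?u x - ?u x)) = (\<lambda>x. f (?u x) * ?u x)" by auto
      ultimately have I: "(\<integral>x. f (?u x) * ?u x \<partial>lebesgue) \<le> (1 + \<tau> n) * ?r"
        using normE_cmult[of V lm 2 ?u] by (simp add: algebra_simps)
      have FI: "(\<integral>x. prim f (?u x) \<partial>lebesgue) \<le> (\<integral>x. f (?u x) * ?u x \<partial>lebesgue) / \<theta>"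
      proof (cases "integrable lebesgue (\<lambda>x. prim f (?u x))")
        case True2: True
        have "(\<integral>x. prim f (?u x) \<partial>lebesgue) \<le> (\<integral>x. f (?u x) * ?u x / \<theta> \<partial>lebesgue)"
          using True True2 Fle th by (intro integral_mono) (auto simp: field_simps)
        then show ?thesis by simp
      next
        case False
        have "0 \<le> (\<integral>x. f (?u x) * ?u x \<partial>lebesgue)" using fs by (intro integral_nonneg_AE) auto
        then show ?thesis using False th by (simp add: not_integrable_integral_eq)
      qed
      have "(1 + \<tau> n) * ?r / \<theta> \<le> (1 + \<delta>) * ?r / \<theta>"
        using tn th nn[of ?u] by (intro divide_right_mono mult_right_mono) auto
      then have "\<kappa> * ?r \<le> Psi V lm f ?u"
        using I FI th unfolding Psi_def \<kappa>_def by (simp add: field_simps divide_right_mono)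
      then have "\<kappa> * ?r \<le> M" using M[of n] by linarith
      then have "?r \<le> M / \<kappa>" using \<kappa>pos by (simp add: field_simps)
      then show ?thesis by linarith
    next
      case False
      have "(\<lambda>x. 0) \<in> E_sp V lm" using E_cmult[of "u n" V lm 0] uE by simp
      then have "norm_E V lm (\<lambda>x. 0) - ?r \<ge>
               (\<integral>x. f (?u x) * (0 - ?u x) \<partial>lebesgue)
               - \<tau> n * norm_E V lm (\<lambda>x. 0 - ?u x)" by (rule PS[rule_format])
      moreover have "norm_E V lm (\<lambda>x. 0) = 0" using normE_cmult[of V lm 0 ?u] by simp
      moreover have "norm_E V lm (\<lambda>x. 0 - ?u x) = ?r" using normE_cmult[of V lm "-1" ?u] by simp
      moreover have "\<not> integrable lebesgue (\<lambda>x. f (?u x) * (0 - ?u x))"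
      proof
        assume "integrable lebesgue (\<lambda>x. f (?u x) * (0 - ?u x))"
        then have "integrable lebesgue (\<lambda>x. - (f (?u x) * (0 - ?u x)))" by (rule integrable_minus)
        then show False using False by simp
      qed
      ultimately have "- ?r \<ge> - \<tau> n * ?r"
        by (simp add: not_integrable_integral_eq)
      then have "(1 - \<tau> n) * ?r \<le> 0" by (simp add: algebra_simps)
      moreover have "1 - \<tau> n > 0" using tn unfolding \<delta>_def by auto
      ultimately have "?r \<le> 0" by (simp add: mult_le_0_iff)
      then show ?thesis by linarith
    qed
  qed
  define C where "C = max (max 0 (M / \<kappa>)) (Max ((\<lambda>n. norm_E V lm (u n)) ` {..<N0} \<union> {0}))"
  have "norm_E V lm (u n) \<le> C" for n
  proof (cases "n \<ge> N0")
    case True then show ?thesis using big unfolding C_def by fastforce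
  next
    case False
    then have "norm_E V lm (u n) \<le> Max ((\<lambda>n. norm_E V lm (u n)) ` {..<N0} \<union> {0})"
      by (intro Max_ge) auto
    then show ?thesis unfolding C_def by linarith
  qed
  then show ?thesis by blast
qed

end
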